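(* Let $D\subset\mathbb R^d$ be open and connected, $U=\mathbb R^N$, $1\le p<\infty$. Every functional $L_g\in\mathcal C^p(D;U)$ is well-defined and finite on $L^p(D;U)$. Every functional $L_g\in\mathcal C^p_1(D;U)$ is continuous on $L^p(D;U)$ and is Lipschitz continuous on bounded subsets of $L^p(D;U)$.
   Context: A Carathéodory function $g:D^k\times U^k\to\mathbb R$ is measurable, continuous in $\xi$ for a.e. $x$, measurable in $x$ for every $\xi$. For $\alpha\in\{0,1\}^k$: $\bar\alpha=\mathbb 1-\alpha$, $x_{\bar\alpha}$ the subvector of entries of $x$ with $\bar\alpha_i=1$, $|\xi^\alpha|=\prod_{i:\alpha_i=1}|\xi_i|$; $\hat x^i$ is $x$ with $i$-th entry removed. $\mathcal H^{k,p}(D;U)$: Carathéodory $g$ with $|g(x,\xi)|\le\sum_{\alpha\in\{0,1\}^k}\phi_{|\bar\alpha|}(x_{\bar\alpha})|\xi^\alpha|^p$ for nonnegative $\phi_i\in L^1(D^i)$, $i=0,\dots,k$ ($L^1(D^0)\cong\mathbb R$). $\mathcal H^{k,p}_1(D;U)$: those $g$ for which there are $r>0$ and nonnegative $h\in\mathcal H^{k-1,p}(D;U)$ with $|g(x,\zeta)-g(y,\xi)|\le\sum_{i=1}^k|\zeta_i-\xi_i|\max(|\xi_i|,|\zeta_i|)^{p-1}h(\hat x^i,\hat\xi^i)$ for all $x\in D^k$, $y\in B_r(x)$, $\xi,\zeta\in U^k$. $L_g(u):=\int_{D^k}g(x_1,\dots,x_k,u(x_1),\dots,u(x_k))dx$.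 $\mathcal C^p(D;U)=\{L_g:g\in\mathcal H^{k,p},k\in\mathbb N\}$, $\mathcal C^p_1(D;U)=\{L_g:g\in\mathcal H^{k,p}_1,k\in\mathbb N\}$. *)

theory Defs
  imports "HOL-Analysis.Analysis"
begin

text \<open>Points of D^k (resp. U^k) are represented as extensional functions
  nat => 'a on the index set {..<k}, i.e. elements of PiE {..<k} (%_. D).\<close>

definition DK :: "'a::euclidean_space set \<Rightarrow> nat \<Rightarrow> (nat \<Rightarrow> 'a) measure" where
  "DK D k = completion (PiM {..<k} (\<lambda>_. lebesgue_on D))"

definition subvec :: "(nat \<Rightarrow> 'c) \<Rightarrow> nat set \<Rightarrow> (nat \<Rightarrow> 'c)" where
  "subvec x S = (\<lambda>i. if i < card S then x (sorted_list_of_set S ! i) else undefined)"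

definition caratheodory ::
  "'a::euclidean_space set \<Rightarrow> nat \<Rightarrow> ((nat \<Rightarrow> 'a) \<Rightarrow> (nat \<Rightarrow> 'b::euclidean_space) \<Rightarrow> real) \<Rightarrow> bool" where
  "caratheodory D k g \<longleftrightarrow>
     (\<lambda>(x, \<xi>). g x \<xi>) \<in> borel_measurable (DK D k \<Otimes>\<^sub>M PiM {..<k} (\<lambda>_. borel)) \<and>
     (AE x in DK D k. continuous_on (PiE {..<k} (\<lambda>_. UNIV)) (g x)) \<and>
     (\<forall>\<xi> \<in> PiE {..<k} (\<lambda>_. UNIV). (\<lambda>x. g x \<xi>) \<in> borel_measurable (DK D k))"

text \<open>The class H^{k,p}(D;U). A multi-index alpha in {0,1}^k is encoded by the set
  A = {i. alpha_i = 1}; its complement {..<k} - A corresponds to alpha-bar.\<close>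
definition Hkp ::
  "'a::euclidean_space set \<Rightarrow> nat \<Rightarrow> real \<Rightarrow> ((nat \<Rightarrow> 'a) \<Rightarrow> (nat \<Rightarrow> 'b::euclidean_space) \<Rightarrow> real) \<Rightarrow> bool" where
  "Hkp D k p g \<longleftrightarrow> caratheodory D k g \<and>
     (\<exists>\<phi> :: nat \<Rightarrow> (nat \<Rightarrow> 'a) \<Rightarrow> real.
        (\<forall>j\<le>k. (\<forall>x. 0 \<le> \<phi> j x) \<and> integrable (DK D j) (\<phi> j)) \<and>
        (\<forall>x \<in> PiE {..<k} (\<lambda>_. D). \<forall>\<xi> \<in> PiE {..<k} (\<lambda>_. UNIV).
           \<bar>g x \<xi>\<bar> \<le> (\<Sum>A\<in>Pow {..<k}.
               \<phi> (card ({..<k} - A)) (subvec x ({..<k} - A)) * (\<Prod>i\<in>A. norm (\<xi> i)) powr p)))"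

text \<open>The class H^{k,p}_1(D;U) (a subclass of H^{k,p}); the ball B_r(x) is taken in D^k
  with the Euclidean norm of R^{dk}.\<close>
definition Hkp1 ::
  "'a::euclidean_space set \<Rightarrow> nat \<Rightarrow> real \<Rightarrow> ((nat \<Rightarrow> 'a) \<Rightarrow> (nat \<Rightarrow> 'b::euclidean_space) \<Rightarrow> real) \<Rightarrow> bool" where
  "Hkp1 D k p g \<longleftrightarrow> Hkp D k p g \<and>
     (\<exists>r>0. \<exists>h :: (nat \<Rightarrow> 'a) \<Rightarrow> (nat \<Rightarrow> 'b) \<Rightarrow> real.
        Hkp D (k - 1) p h \<and> (\<forall>x \<xi>. 0 \<le> h x \<xi>) \<and>
        (\<forall>x \<in> PiE {..<k} (\<lambda>_. D). \<forall>y \<in> PiE {..<k} (\<lambda>_. D).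
           (\<Sum>i<k. (norm (x i - y i))\<^sup>2) < r\<^sup>2 \<longrightarrow>
           (\<forall>\<xi> \<in> PiE {..<k} (\<lambda>_. UNIV). \<forall>\<zeta> \<in> PiE {..<k} (\<lambda>_. UNIV).
              \<bar>g x \<zeta> - g y \<xi>\<bar> \<le> (\<Sum>i<k. norm (\<zeta> i - \<xi> i) * (max (norm (\<xi> i)) (norm (\<zeta> i))) powr (p - 1)
                    * h (subvec x ({..<k} - {i})) (subvec \<xi> ({..<k} - {i}))))))"

definition Lg :: "'a::euclidean_space set \<Rightarrow> nat \<Rightarrow> ((nat \<Rightarrow> 'a) \<Rightarrow> (nat \<Rightarrow> 'b) \<Rightarrow> real)
    \<Rightarrow> ('a \<Rightarrow> 'b) \<Rightarrow> real" where
  "Lg D k g u = (\<integral>x. g x (\<lambda>i\<in>{..<k}. u (x i)) \<partial>DK D k)"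

definition in_Lp :: "'a::euclidean_space set \<Rightarrow> real \<Rightarrow> ('a \<Rightarrow> 'b::euclidean_space) \<Rightarrow> bool" where
  "in_Lp D p u \<longleftrightarrow> u \<in> borel_measurable (lebesgue_on D) \<and>
     integrable (lebesgue_on D) (\<lambda>x. norm (u x) powr p)"

definition Lp_norm :: "'a::euclidean_space set \<Rightarrow> real \<Rightarrow> ('a \<Rightarrow> 'b::euclidean_space) \<Rightarrow> real" where
  "Lp_norm D p u = (\<integral>x. norm (u x) powr p \<partial>lebesgue_on D) powr (1 / p)"

end

theory Submission
  imports Defs
begin

lemma sf_lebesgue: "sigma_finite_measure (lebesgue :: 'a::euclidean_space measure)"
proof -
  obtain A :: "'a set set" where A: "countable A" "A \<subseteq> sets lborel" "\<Union>A = space lborel"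
    "\<forall>a\<in>A. emeasure lborel a \<noteq> \<infinity>"
    using lborel.sigma_finite_countable by blast
  show ?thesis
    by unfold_locales (use A in \<open>intro exI[of _ A]; auto\<close>)
qed

lemma sf_leb: "sigma_finite_measure (lebesgue_on (D::'a::euclidean_space set))" if "D \<in> sets lebesgue"
  by (rule sigma_finite_measure_restrict_space) (auto intro: that sf_lebesgue)

lemma subvec_restrict: "subvec x S = (\<lambda>j\<in>{..<card S}. x (sorted_list_of_set S ! j))"
  by (auto simp: subvec_def restrict_def)

lemma bij_sorted: "finite S \<Longrightarrow> bij_betw (\<lambda>j. sorted_list_of_set S ! j) {..<card S} S"
  by (rule bij_betw_nth) auto

lemma sorted_in: "finite S \<Longrightarrow> j < card S \<Longrightarrow> sorted_list_of_set S ! j \<in> S"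
  using bij_betw_apply[OF bij_sorted] by auto

lemma measurable_subvec[measurable]:
  assumes "finite S" "S \<subseteq> I"
  shows "(\<lambda>x. subvec x S) \<in> PiM I (\<lambda>_. N) \<rightarrow>\<^sub>M PiM {..<card S} (\<lambda>_. N)"
  unfolding subvec_restrict
  by (intro measurable_restrict measurable_component_singleton) (use assms sorted_in in auto)

lemma subvec_space: "finite S \<Longrightarrow> x \<in> PiE I (\<lambda>_. B) \<Longrightarrow> S \<subseteq> I \<Longrightarrow> subvec x S \<in> PiE {..<card S} (\<lambda>_. B)"
  unfolding subvec_restrict using sorted_in by (auto simp: PiE_iff)

lemma distr_subvec:
  assumes sf: "sigma_finite_measure N" and S: "finite S"
  shows "distr (PiM S (\<lambda>_. N)) (PiM {..<card S} (\<lambda>_. N)) (\<lambda>x. subvec x S) = PiM {..<card S} (\<lambda>_. N)"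
proof -
  interpret product_sigma_finite "\<lambda>_. N" by (simp add: product_sigma_finite_def sf)
  define \<sigma> where "\<sigma> j = sorted_list_of_set S ! j" for j
  define \<tau> where "\<tau> = the_inv_into {..<card S} \<sigma>"
  have bij: "bij_betw \<sigma> {..<card S} S" using bij_sorted[OF S] by (simp add: \<sigma>_def[abs_def])
  have tau: "bij_betw \<tau> S {..<card S}" unfolding \<tau>_def by (rule bij_betw_the_inv_into[OF bij])
  have st: "i \<in> S \<Longrightarrow> \<sigma> (\<tau> i) = i" for i unfolding \<tau>_def using bij
    by (simp add: bij_betw_def f_the_inv_into_f)
  have ts: "j < card S \<Longrightarrow> \<tau> (\<sigma> j) = j" for j unfolding \<tau>_def using bij
    by (simp add: bij_betw_def the_inv_into_f_f)
  show ?thesis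
  proof (rule PiM_eqI)
    show "finite {..<card S}" by simp
    show "sets (distr (Pi\<^sub>M S (\<lambda>_. N)) (Pi\<^sub>M {..<card S} (\<lambda>_. N)) (\<lambda>x. subvec x S)) = sets (Pi\<^sub>M {..<card S} (\<lambda>_. N))"
      by simp
    fix A assume A: "\<And>i. i \<in> {..<card S} \<Longrightarrow> A i \<in> sets N"
    have Asp: "i < card S \<Longrightarrow> A i \<subseteq> space N" for i using A sets.sets_into_space by auto
    have pre: "(\<lambda>x. subvec x S) -` Pi\<^sub>E {..<card S} A \<inter> space (Pi\<^sub>M S (\<lambda>_. N)) = Pi\<^sub>E S (\<lambda>i. A (\<tau> i))"
    proof (rule set_eqI, rule iffI)
      fix x assume "x \<in> (\<lambda>x. subvec x S) -` Pi\<^sub>E {..<card S} A \<inter> space (Pi\<^sub>M S (\<lambda>_. N))"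
      then have x: "subvec x S \<in> Pi\<^sub>E {..<card S} A" "x \<in> space (Pi\<^sub>M S (\<lambda>_. N))" by auto
      show "x \<in> Pi\<^sub>E S (\<lambda>i. A (\<tau> i))"
      proof (rule PiE_I)
        fix i assume i: "i \<in> S"
        have "\<tau> i < card S" using tau i by (auto simp: bij_betw_def)
        then have "subvec x S (\<tau> i) \<in> A (\<tau> i)" using x(1) by (auto simp: PiE_iff)
        then show "x i \<in> A (\<tau> i)" using \<open>\<tau> i < card S\<close> st[OF i] by (simp add: subvec_def \<sigma>_def)
      next
        fix i assume "i \<notin> S" then show "x i = undefined" using x(2) by (auto simp: space_PiM PiE_iff extensional_def)
      qed
    next
      fix x assume x: "x \<in> Pi\<^sub>E S (\<lambda>i. A (\<tau> i))"
      have "subvec x S \<in> Pi\<^sub>E {..<card S} A"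
      proof (rule PiE_I)
        fix j assume j: "j \<in> {..<card S}"
        have "\<sigma> j \<in> S" using bij j by (auto simp: bij_betw_def)
        then have "x (\<sigma> j) \<in> A (\<tau> (\<sigma> j))" using x by (auto simp: PiE_iff)
        then show "subvec x S j \<in> A j" using j ts by (simp add: subvec_def \<sigma>_def)
      qed (simp add: subvec_def)
      moreover have "x \<in> space (Pi\<^sub>M S (\<lambda>_. N))"
      proof -
        have "Pi\<^sub>E S (\<lambda>i. A (\<tau> i)) \<subseteq> Pi\<^sub>E S (\<lambda>_. space N)"
          by (rule PiE_mono) (use Asp tau in \<open>auto simp: bij_betw_def\<close>)
        then show ?thesis using x by (auto simp: space_PiM)
      qed
      ultimately show "x \<in> (\<lambda>x. subvec x S) -` Pi\<^sub>E {..<card S} A \<inter> space (Pi\<^sub>M S (\<lambda>_. N))" by simp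
    qed
    have "emeasure (distr (Pi\<^sub>M S (\<lambda>_. N)) (Pi\<^sub>M {..<card S} (\<lambda>_. N)) (\<lambda>x. subvec x S)) (Pi\<^sub>E {..<card S} A)
        = emeasure (Pi\<^sub>M S (\<lambda>_. N)) (Pi\<^sub>E S (\<lambda>i. A (\<tau> i)))"
      using A S by (subst emeasure_distr) (auto simp: pre)
    also have "\<dots> = (\<Prod>i\<in>S. emeasure N (A (\<tau> i)))"
      using A S tau by (subst emeasure_PiM) (auto simp: bij_betw_def)
    also have "\<dots> = (\<Prod>j\<in>{..<card S}. emeasure N (A j))"
      using prod.reindex_bij_betw[OF tau, of "\<lambda>j. emeasure N (A j)"] by simp
    finally show "emeasure (distr (Pi\<^sub>M S (\<lambda>_. N)) (Pi\<^sub>M {..<card S} (\<lambda>_. N)) (\<lambda>x. subvec x S)) (Pi\<^sub>E {..<card S} A)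
        = (\<Prod>j\<in>{..<card S}. emeasure N (A j))" .
  qed
qed
lemma nn_integral_subvec:
  assumes sf: "sigma_finite_measure N" and S: "finite S"
    and f: "f \<in> borel_measurable (PiM {..<card S} (\<lambda>_. N))"
  shows "(\<integral>\<^sup>+x. f (subvec x S) \<partial>PiM S (\<lambda>_. N)) = (\<integral>\<^sup>+y. f y \<partial>PiM {..<card S} (\<lambda>_. N))"
proof -
  have "(\<integral>\<^sup>+y. f y \<partial>PiM {..<card S} (\<lambda>_. N)) =
     (\<integral>\<^sup>+y. f y \<partial>distr (PiM S (\<lambda>_. N)) (PiM {..<card S} (\<lambda>_. N)) (\<lambda>x. subvec x S))"
    by (simp add: distr_subvec[OF sf S])
  also have "\<dots> = (\<integral>\<^sup>+x. f (subvec x S) \<partial>PiM S (\<lambda>_. N))"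
    by (rule nn_integral_distr) (use S f in auto)
  finally show ?thesis by simp
qed

lemma split_integral:
  fixes f h :: "(nat \<Rightarrow> 'x) \<Rightarrow> ennreal"
  assumes sf: "sigma_finite_measure N" and S: "S \<subseteq> {..<k}"
    and f[measurable]: "f \<in> borel_measurable (PiM {..<card S} (\<lambda>_. N))"
    and h[measurable]: "h \<in> borel_measurable (PiM {..<card ({..<k} - S)} (\<lambda>_. N))"
  shows "(\<integral>\<^sup>+x. f (subvec x S) * h (subvec x ({..<k} - S)) \<partial>PiM {..<k} (\<lambda>_. N))
        = (\<integral>\<^sup>+y. f y \<partial>PiM {..<card S} (\<lambda>_. N)) * (\<integral>\<^sup>+y. h y \<partial>PiM {..<card ({..<k} - S)} (\<lambda>_. N))"
proof -
  interpret product_sigma_finite "\<lambda>_. N" by (simp add: product_sigma_finite_def sf)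
  define T where "T = {..<k} - S"
  have fS: "finite S" using S finite_subset by blast
  have fT: "finite T" by (simp add: T_def)
  have U: "{..<k} = S \<union> T" and dj: "S \<inter> T = {}" using S by (auto simp: T_def)
  have mS[measurable]: "(\<lambda>x. subvec x S) \<in> PiM (S \<union> T) (\<lambda>_. N) \<rightarrow>\<^sub>M PiM {..<card S} (\<lambda>_. N)"
    using fS by (intro measurable_subvec) auto
  have mT[measurable]: "(\<lambda>x. subvec x T) \<in> PiM (S \<union> T) (\<lambda>_. N) \<rightarrow>\<^sub>M PiM {..<card T} (\<lambda>_. N)"
    using fT by (intro measurable_subvec) auto
  have h': "h \<in> borel_measurable (PiM {..<card T} (\<lambda>_. N))" using h by (simp add: T_def)
  have eS: "subvec (merge S T (x, y)) S = subvec x S" for x y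
    using sorted_in[OF fS] by (auto simp: subvec_def merge_def)
  have eT: "subvec (merge S T (x, y)) T = subvec y T" for x y
  proof (rule ext)
    fix i show "subvec (merge S T (x, y)) T i = subvec y T i"
    proof (cases "i < card T")
      case True
      then have "sorted_list_of_set T ! i \<in> T" by (rule sorted_in[OF fT])
      then have "sorted_list_of_set T ! i \<notin> S" using dj by blast
      then show ?thesis using True \<open>sorted_list_of_set T ! i \<in> T\<close> by (simp add: subvec_def merge_def)
    qed (simp add: subvec_def)
  qed
  have "(\<integral>\<^sup>+x. f (subvec x S) * h (subvec x T) \<partial>PiM (S \<union> T) (\<lambda>_. N))
      = (\<integral>\<^sup>+x. (\<integral>\<^sup>+y. f (subvec (merge S T (x, y)) S) * h (subvec (merge S T (x, y)) T) \<partial>PiM T (\<lambda>_. N)) \<partial>PiM S (\<lambda>_. N))"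
    by (rule product_nn_integral_fold) (use dj fS fT h' in auto)
  also have "\<dots> = (\<integral>\<^sup>+x. f (subvec x S) * (\<integral>\<^sup>+y. h (subvec y T) \<partial>PiM T (\<lambda>_. N)) \<partial>PiM S (\<lambda>_. N))"
    unfolding eS eT
    by (rule nn_integral_cong, rule nn_integral_cmult) (use fT h' in auto)
  also have "\<dots> = (\<integral>\<^sup>+x. f (subvec x S) \<partial>PiM S (\<lambda>_. N)) * (\<integral>\<^sup>+y. h (subvec y T) \<partial>PiM T (\<lambda>_. N))"
    by (rule nn_integral_multc) (use fS in auto)
  also have "\<dots> = (\<integral>\<^sup>+y. f y \<partial>PiM {..<card S} (\<lambda>_. N)) * (\<integral>\<^sup>+y. h y \<partial>PiM {..<card T} (\<lambda>_. N))"
    by (simp add: nn_integral_subvec[OF sf fS f] nn_integral_subvec[OF sf fT h'])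
  finally have X: "(\<integral>\<^sup>+x. f (subvec x S) * h (subvec x T) \<partial>PiM (S \<union> T) (\<lambda>_. N)) = (\<integral>\<^sup>+y. f y \<partial>PiM {..<card S} (\<lambda>_. N)) * (\<integral>\<^sup>+y. h y \<partial>PiM {..<card T} (\<lambda>_. N))" .
  have eqU: "S \<union> ({..<k} - S) = {..<k}" using S by auto
  show ?thesis using X unfolding T_def eqU .
qed
abbreviation PP :: "'a::euclidean_space set \<Rightarrow> nat \<Rightarrow> (nat \<Rightarrow> 'a) measure" where
  "PP D n \<equiv> PiM {..<n} (\<lambda>_. lebesgue_on D)"

lemma prod_integral:
  fixes w :: "'x \<Rightarrow> ennreal"
  assumes sf: "sigma_finite_measure N" and w[measurable]: "w \<in> borel_measurable N"
  shows "(\<integral>\<^sup>+y. (\<Prod>j<n. w (y j)) \<partial>PiM {..<n} (\<lambda>_. N)) = (\<integral>\<^sup>+t. w t \<partial>N) ^ n"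
proof -
  interpret product_sigma_finite "\<lambda>_. N" by (simp add: product_sigma_finite_def sf)
  show ?thesis by (subst product_nn_integral_prod) auto
qed

lemma dominate:
  fixes f :: "'x \<Rightarrow> real"
  assumes f: "integrable (completion N) f" and nn: "\<forall>x. 0 \<le> f x"
  shows "\<exists>\<psi> \<in> borel_measurable N. (\<forall>x\<in>space N. ennreal (f x) \<le> \<psi> x) \<and>
     (\<integral>\<^sup>+x. \<psi> x \<partial>N) = ennreal (integral\<^sup>L (completion N) f)"
proof -
  have "f \<in> borel_measurable (completion N)" using f by auto
  from completion_ex_borel_measurable_real[OF this] obtain f' where
    f'[measurable]: "f' \<in> borel_measurable N" and ae: "AE x in N. f x = f' x" by blast
  from ae obtain Z where Z: "Z \<in> null_sets N" "{x\<in>space N. \<not> f x = f' x} \<subseteq> Z"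
    by (auto elim!: AE_E)
  define \<psi> where "\<psi> x = (if x \<in> Z then \<infinity> else ennreal (f' x))" for x
  have Zs[measurable]: "Z \<in> sets N" using Z by auto
  have m: "\<psi> \<in> borel_measurable N" unfolding \<psi>_def by measurable
  have le: "\<forall>x\<in>space N. ennreal (f x) \<le> \<psi> x" using Z by (auto simp: \<psi>_def)
  have "(\<integral>\<^sup>+x. \<psi> x \<partial>N) = (\<integral>\<^sup>+x. ennreal (f x) \<partial>N)"
  proof (rule nn_integral_cong_AE)
    show "AE x in N. \<psi> x = ennreal (f x)"
      using AE_not_in[OF Z(1)] ae by eventually_elim (auto simp: \<psi>_def)
  qed
  also have "\<dots> = (\<integral>\<^sup>+x. ennreal (f x) \<partial>completion N)" by (simp add: nn_integral_completion)
  also have "\<dots> = ennreal (integral\<^sup>L (completion N) f)"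
    by (rule nn_integral_eq_integral) (use f nn in auto)
  finally show ?thesis using m le by blast
qed
lemma space_PP: "space (PP D n) = PiE {..<n} (\<lambda>_. D)"
  by (simp add: space_PiM)

lemma Hkp_bound:
  fixes g :: "(nat \<Rightarrow> 'a::euclidean_space) \<Rightarrow> (nat \<Rightarrow> 'b::euclidean_space) \<Rightarrow> real"
  assumes D: "D \<in> sets lebesgue" and H: "Hkp D k p g"
  shows "\<exists>c::nat\<Rightarrow>real. (\<forall>j. 0 \<le> c j) \<and> (\<forall>u. in_Lp D p u \<longrightarrow>
     (\<exists>G \<in> borel_measurable (PP D k).
       (\<forall>x \<in> space (PP D k). ennreal \<bar>g x (\<lambda>i\<in>{..<k}. u (x i))\<bar> \<le> G x) \<and>
       (\<integral>\<^sup>+x. G x \<partial>PP D k) = ennreal (\<Sum>A\<in>Pow {..<k}. c (card ({..<k} - A)) *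
            (\<integral>t. norm (u t) powr p \<partial>lebesgue_on D) ^ card A)))"
proof -
  have sf: "sigma_finite_measure (lebesgue_on D)" by (rule sf_leb[OF D])
  from H obtain \<phi> :: "nat \<Rightarrow> (nat \<Rightarrow> 'a) \<Rightarrow> real" where
    \<phi>: "\<forall>j\<le>k. (\<forall>x. 0 \<le> \<phi> j x) \<and> integrable (DK D j) (\<phi> j)" and
    bnd: "\<forall>x \<in> PiE {..<k} (\<lambda>_. D). \<forall>\<xi> \<in> PiE {..<k} (\<lambda>_. UNIV).
           \<bar>g x \<xi>\<bar> \<le> (\<Sum>A\<in>Pow {..<k}.
               \<phi> (card ({..<k} - A)) (subvec x ({..<k} - A)) * (\<Prod>i\<in>A. norm (\<xi> i)) powr p)"
    unfolding Hkp_def by blast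
  define c where "c j = (if j \<le> k then integral\<^sup>L (DK D j) (\<phi> j) else 0)" for j
  have "\<forall>j. \<exists>\<psi>. j \<le> k \<longrightarrow> \<psi> \<in> borel_measurable (PP D j) \<and> (\<forall>x\<in>space (PP D j). ennreal (\<phi> j x) \<le> \<psi> x) \<and>
     (\<integral>\<^sup>+x. \<psi> x \<partial>PP D j) = ennreal (c j)"
  proof (intro allI)
    fix j show "\<exists>\<psi>. j \<le> k \<longrightarrow> \<psi> \<in> borel_measurable (PP D j) \<and> (\<forall>x\<in>space (PP D j). ennreal (\<phi> j x) \<le> \<psi> x) \<and>
     (\<integral>\<^sup>+x. \<psi> x \<partial>PP D j) = ennreal (c j)"
    proof (cases "j \<le> k")
      case True
      then show ?thesis using dominate[of "PP D j" "\<phi> j"] \<phi> by (auto simp: c_def DK_def)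
    qed auto
  qed
  then obtain \<psi> where \<psi>: "\<And>j. j \<le> k \<Longrightarrow> \<psi> j \<in> borel_measurable (PP D j)"
    "\<And>j x. j \<le> k \<Longrightarrow> x\<in>space (PP D j) \<Longrightarrow> ennreal (\<phi> j x) \<le> \<psi> j x"
    "\<And>j. j \<le> k \<Longrightarrow> (\<integral>\<^sup>+x. \<psi> j x \<partial>PP D j) = ennreal (c j)"
    by metis
  have c0: "\<forall>j. 0 \<le> c j"
  proof
    fix j show "0 \<le> c j"
    proof (cases "j \<le> k")
      case True then show ?thesis using \<phi> unfolding c_def by (auto intro!: integral_nonneg_AE)
    next
      case False then show ?thesis by (simp add: c_def)
    qed
  qed
  show ?thesis
  proof (intro exI[of _ c] conjI allI impI)
    fix u :: "'a \<Rightarrow> 'b" assume u: "in_Lp D p u"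
    have um[measurable]: "u \<in> borel_measurable (lebesgue_on D)" using u by (simp add: in_Lp_def)
    have ui: "integrable (lebesgue_on D) (\<lambda>x. norm (u x) powr p)" using u by (simp add: in_Lp_def)
    define J where "J = (\<integral>t. norm (u t) powr p \<partial>lebesgue_on D)"
    define w where "w t = ennreal (norm (u t) powr p)" for t
    have wm[measurable]: "w \<in> borel_measurable (lebesgue_on D)" unfolding w_def by measurable
    have wJ: "(\<integral>\<^sup>+t. w t \<partial>lebesgue_on D) = ennreal J"
      unfolding w_def J_def by (rule nn_integral_eq_integral) (use ui in auto)
    define G where "G x = (\<Sum>A\<in>Pow {..<k}. \<psi> (card ({..<k} - A)) (subvec x ({..<k} - A)) * (\<Prod>i\<in>A. w (x i)))" for x
    have termm: "(\<lambda>x. \<psi> (card ({..<k} - A)) (subvec x ({..<k} - A)) * (\<Prod>i\<in>A. w (x i))) \<in> borel_measurable (PP D k)"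
      if A: "A \<in> Pow {..<k}" for A
    proof -
      have "card ({..<k} - A) \<le> k" by (metis card_Diff_subset card_lessThan diff_le_self finite_lessThan A PowD finite_subset)
      then have [measurable]: "\<psi> (card ({..<k} - A)) \<in> borel_measurable (PP D (card ({..<k} - A)))" by (rule \<psi>(1))
      have [measurable]: "(\<lambda>x. subvec x ({..<k} - A)) \<in> PP D k \<rightarrow>\<^sub>M PP D (card ({..<k} - A))"
        by (rule measurable_subvec) auto
      have [measurable]: "(\<lambda>x. \<Prod>i\<in>A. w (x i)) \<in> borel_measurable (PP D k)"
      proof (rule borel_measurable_prod_ennreal)
        fix i assume "i \<in> A"
        then have "i \<in> {..<k}" using A by auto
        then show "(\<lambda>x. w (x i)) \<in> borel_measurable (PP D k)"
          by (intro measurable_compose[OF measurable_component_singleton[of i "{..<k}" "\<lambda>_. lebesgue_on D"] wm])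
      qed
      show ?thesis by measurable
    qed
    have Gm: "G \<in> borel_measurable (PP D k)" unfolding G_def
      by (rule borel_measurable_sum) (rule termm)
    have Gle: "ennreal \<bar>g x (\<lambda>i\<in>{..<k}. u (x i))\<bar> \<le> G x" if x: "x \<in> space (PP D k)" for x
    proof -
      define \<xi> where "\<xi> = (\<lambda>i\<in>{..<k}. u (x i))"
      have x': "x \<in> PiE {..<k} (\<lambda>_. D)" using x D by (simp add: space_PiM)
      have \<xi>': "\<xi> \<in> PiE {..<k} (\<lambda>_. UNIV)" by (simp add: \<xi>_def)
      have nnA: "0 \<le> \<phi> (card ({..<k} - A)) (subvec x ({..<k} - A)) * (\<Prod>i\<in>A. norm (\<xi> i)) powr p"
        if A: "A \<in> Pow {..<k}" for A
      proof -
        have "card ({..<k} - A) \<le> k" by (metis card_Diff_subset card_lessThan diff_le_self finite_lessThan A PowD finite_subset)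
        then show ?thesis using \<phi> by auto
      qed
      have "ennreal \<bar>g x \<xi>\<bar> \<le> ennreal (\<Sum>A\<in>Pow {..<k}.
               \<phi> (card ({..<k} - A)) (subvec x ({..<k} - A)) * (\<Prod>i\<in>A. norm (\<xi> i)) powr p)"
        by (rule ennreal_leI) (use bnd x' \<xi>' in blast)
      also have "\<dots> = (\<Sum>A\<in>Pow {..<k}. ennreal (
               \<phi> (card ({..<k} - A)) (subvec x ({..<k} - A)) * (\<Prod>i\<in>A. norm (\<xi> i)) powr p))"
        by (rule sum_ennreal[symmetric]) (rule nnA)
      also have "\<dots> \<le> G x" unfolding G_def
      proof (rule sum_mono)
        fix A assume A: "A \<in> Pow {..<k}"
        have ck: "card ({..<k} - A) \<le> k" by (metis card_Diff_subset card_lessThan diff_le_self finite_lessThan A PowD finite_subset)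
        have "(\<Prod>i\<in>A. norm (\<xi> i)) = (\<Prod>i\<in>A. norm (u (x i)))"
          by (rule prod.cong) (use A in \<open>auto simp: \<xi>_def\<close>)
        then have e1: "(\<Prod>i\<in>A. norm (\<xi> i)) powr p = (\<Prod>i\<in>A. norm (u (x i)) powr p)"
          by (simp add: prod_powr_distrib)
        have e2: "ennreal (\<Prod>i\<in>A. norm (u (x i)) powr p) = (\<Prod>i\<in>A. w (x i))"
          unfolding w_def by (rule prod_ennreal[symmetric]) auto
        have sx: "subvec x ({..<k} - A) \<in> space (PP D (card ({..<k} - A)))"
          unfolding space_PP using x' by (intro subvec_space) auto
        have "ennreal (\<phi> (card ({..<k} - A)) (subvec x ({..<k} - A)) * (\<Prod>i\<in>A. norm (\<xi> i)) powr p)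
            = ennreal (\<phi> (card ({..<k} - A)) (subvec x ({..<k} - A))) * ennreal ((\<Prod>i\<in>A. norm (\<xi> i)) powr p)"
          by (rule ennreal_mult) (use \<phi> ck in auto)
        also have "\<dots> \<le> \<psi> (card ({..<k} - A)) (subvec x ({..<k} - A)) * (\<Prod>i\<in>A. w (x i))"
          unfolding e1 e2 by (rule mult_right_mono) (use \<psi>(2)[OF ck sx] in auto)
        finally show "ennreal (\<phi> (card ({..<k} - A)) (subvec x ({..<k} - A)) * (\<Prod>i\<in>A. norm (\<xi> i)) powr p)
            \<le> \<psi> (card ({..<k} - A)) (subvec x ({..<k} - A)) * (\<Prod>i\<in>A. w (x i))" .
      qed
      finally show ?thesis by (simp add: \<xi>_def)
    qed
    have J0: "0 \<le> J" unfolding J_def by (rule integral_nonneg_AE) auto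
    have termi: "(\<integral>\<^sup>+x. \<psi> (card ({..<k} - A)) (subvec x ({..<k} - A)) * (\<Prod>i\<in>A. w (x i)) \<partial>PP D k)
       = ennreal (c (card ({..<k} - A)) * J ^ card A)" if A: "A \<in> Pow {..<k}" for A
    proof -
      have ck: "card ({..<k} - A) \<le> k" by (metis card_Diff_subset card_lessThan diff_le_self finite_lessThan A PowD finite_subset)
      have fA: "finite A" using A finite_subset by auto
      define W where "W y = (\<Prod>j<card A. w (y j))" for y
      have Wm: "W \<in> borel_measurable (PP D (card A))" unfolding W_def
      proof (rule borel_measurable_prod_ennreal)
        fix i assume "i \<in> {..<card A}"
        then show "(\<lambda>x. w (x i)) \<in> borel_measurable (PP D (card A))"
          by (intro measurable_compose[OF measurable_component_singleton[of i "{..<card A}" "\<lambda>_. lebesgue_on D"] wm])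
      qed
      have eW: "(\<Prod>i\<in>A. w (x i)) = W (subvec x A)" for x
      proof -
        have "W (subvec x A) = (\<Prod>j<card A. w (x (sorted_list_of_set A ! j)))"
          unfolding W_def by (rule prod.cong) (auto simp: subvec_def)
        also have "\<dots> = (\<Prod>i\<in>A. w (x i))"
          using prod.reindex_bij_betw[OF bij_sorted[OF fA], of "\<lambda>i. w (x i)"] by simp
        finally show ?thesis by simp
      qed
      have "(\<integral>\<^sup>+x. \<psi> (card ({..<k} - A)) (subvec x ({..<k} - A)) * (\<Prod>i\<in>A. w (x i)) \<partial>PP D k)
          = (\<integral>\<^sup>+x. W (subvec x A) * \<psi> (card ({..<k} - A)) (subvec x ({..<k} - A)) \<partial>PP D k)"
        by (simp add: eW mult.commute)
      also have "\<dots> = (\<integral>\<^sup>+y. W y \<partial>PP D (card A)) * (\<integral>\<^sup>+y. \<psi> (card ({..<k} - A)) y \<partial>PP D (card ({..<k} - A)))"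
        by (rule split_integral[OF sf]) (use A Wm \<psi>(1)[OF ck] in auto)
      also have "\<dots> = ennreal J ^ card A * ennreal (c (card ({..<k} - A)))"
        unfolding W_def by (simp add: prod_integral[OF sf wm] wJ \<psi>(3)[OF ck])
      also have "\<dots> = ennreal (c (card ({..<k} - A)) * J ^ card A)"
        using J0 c0 by (simp add: ennreal_power ennreal_mult mult.commute)
      finally show ?thesis .
    qed
    have Gint: "(\<integral>\<^sup>+x. G x \<partial>PP D k) = ennreal (\<Sum>A\<in>Pow {..<k}. c (card ({..<k} - A)) * J ^ card A)"
    proof -
      have "(\<integral>\<^sup>+x. G x \<partial>PP D k) = (\<Sum>A\<in>Pow {..<k}. (\<integral>\<^sup>+x. \<psi> (card ({..<k} - A)) (subvec x ({..<k} - A)) * (\<Prod>i\<in>A. w (x i)) \<partial>PP D k))"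
        unfolding G_def by (rule nn_integral_sum) (rule termm)
      also have "\<dots> = (\<Sum>A\<in>Pow {..<k}. ennreal (c (card ({..<k} - A)) * J ^ card A))"
        by (rule sum.cong) (use termi in auto)
      also have "\<dots> = ennreal (\<Sum>A\<in>Pow {..<k}. c (card ({..<k} - A)) * J ^ card A)"
        by (rule sum_ennreal) (use J0 c0 in auto)
      finally show ?thesis .
    qed
    show "\<exists>G \<in> borel_measurable (PP D k).
       (\<forall>x \<in> space (PP D k). ennreal \<bar>g x (\<lambda>i\<in>{..<k}. u (x i))\<bar> \<le> G x) \<and>
       (\<integral>\<^sup>+x. G x \<partial>PP D k) = ennreal (\<Sum>A\<in>Pow {..<k}. c (card ({..<k} - A)) *
            (\<integral>t. norm (u t) powr p \<partial>lebesgue_on D) ^ card A)"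
      using Gm Gle Gint unfolding J_def by blast
  qed (use c0 in blast)
qed
lemma meas_F:
  fixes g :: "(nat \<Rightarrow> 'a::euclidean_space) \<Rightarrow> (nat \<Rightarrow> 'b::euclidean_space) \<Rightarrow> real"
  assumes H: "caratheodory D k g" and u: "u \<in> borel_measurable (lebesgue_on D)"
  shows "(\<lambda>x. g x (\<lambda>i\<in>{..<k}. u (x i))) \<in> borel_measurable (DK D k)"
proof -
  have g: "(\<lambda>(x, \<xi>). g x \<xi>) \<in> borel_measurable (DK D k \<Otimes>\<^sub>M PiM {..<k} (\<lambda>_. borel))"
    using H by (simp add: caratheodory_def)
  have c: "(\<lambda>x. u (x i)) \<in> borel_measurable (DK D k)" if "i \<in> {..<k}" for i
    unfolding DK_def
    by (intro measurable_completion measurable_compose[OF measurable_component_singleton[of i "{..<k}" "\<lambda>_. lebesgue_on D"] u] that)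
  have m: "(\<lambda>x. (x, \<lambda>i\<in>{..<k}. u (x i))) \<in> DK D k \<rightarrow>\<^sub>M (DK D k \<Otimes>\<^sub>M PiM {..<k} (\<lambda>_. borel))"
    by (intro measurable_Pair measurable_ident_sets refl measurable_restrict c)
  show ?thesis using measurable_compose[OF m g] by simp
qed

lemma integrable_F:
  fixes g :: "(nat \<Rightarrow> 'a::euclidean_space) \<Rightarrow> (nat \<Rightarrow> 'b::euclidean_space) \<Rightarrow> real"
  assumes D: "D \<in> sets lebesgue" and H: "Hkp D k p g" and u: "in_Lp D p u"
  shows "integrable (DK D k) (\<lambda>x. g x (\<lambda>i\<in>{..<k}. u (x i)))"
proof (rule integrableI_bounded)
  show "(\<lambda>x. g x (\<lambda>i\<in>{..<k}. u (x i))) \<in> borel_measurable (DK D k)"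
    using H u by (intro meas_F) (auto simp: Hkp_def in_Lp_def)
  obtain c where c: "\<forall>u. in_Lp D p u \<longrightarrow>
     (\<exists>G \<in> borel_measurable (PP D k).
       (\<forall>x \<in> space (PP D k). ennreal \<bar>g x (\<lambda>i\<in>{..<k}. u (x i))\<bar> \<le> G x) \<and>
       (\<integral>\<^sup>+x. G x \<partial>PP D k) = ennreal (\<Sum>A\<in>Pow {..<k}. c (card ({..<k} - A)) *
            (\<integral>t. norm (u t) powr p \<partial>lebesgue_on D) ^ card A))"
    using Hkp_bound[OF D H] by blast
  then obtain G where G: "\<forall>x \<in> space (PP D k). ennreal \<bar>g x (\<lambda>i\<in>{..<k}. u (x i))\<bar> \<le> G x"
    "(\<integral>\<^sup>+x. G x \<partial>PP D k) = ennreal (\<Sum>A\<in>Pow {..<k}. c (card ({..<k} - A)) *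
            (\<integral>t. norm (u t) powr p \<partial>lebesgue_on D) ^ card A)"
    using u by blast
  have "(\<integral>\<^sup>+x. ennreal (norm (g x (\<lambda>i\<in>{..<k}. u (x i)))) \<partial>DK D k)
      = (\<integral>\<^sup>+x. ennreal (norm (g x (\<lambda>i\<in>{..<k}. u (x i)))) \<partial>PP D k)"
    by (simp add: DK_def nn_integral_completion)
  also have "\<dots> \<le> (\<integral>\<^sup>+x. G x \<partial>PP D k)"
    by (rule nn_integral_mono) (use G(1) in auto)
  also have "\<dots> < \<infinity>" using G(2) by simp
  finally show "(\<integral>\<^sup>+x. ennreal (norm (g x (\<lambda>i\<in>{..<k}. u (x i)))) \<partial>DK D k) < \<infinity>" .
qed

lemma AE_comp:
  assumes D: "D \<in> sets lebesgue" and ae: "AE t in lebesgue_on D. u t = v t"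
  shows "AE x in DK D k. (\<lambda>i\<in>{..<k}. u (x i)) = (\<lambda>i\<in>{..<k}. v (x i))"
proof -
  have sf: "sigma_finite_measure (lebesgue_on D)" by (rule sf_leb[OF D])
  interpret product_sigma_finite "\<lambda>_. lebesgue_on D" by (simp add: product_sigma_finite_def sf)
  from ae obtain N where N0: "{t\<in>space (lebesgue_on D). \<not> u t = v t} \<subseteq> N"
    "emeasure (lebesgue_on D) N = 0" and NS: "N \<in> sets (lebesgue_on D)"
    by (rule AE_E)
  have N: "N \<in> null_sets (lebesgue_on D)" "{t\<in>space (lebesgue_on D). u t \<noteq> v t} \<subseteq> N"
    using N0 NS by auto
  have NsD: "N \<subseteq> D" using sets.sets_into_space[OF NS] D by simp
  have "AE x in PP D k. u (x i) = v (x i)" if i: "i \<in> {..<k}" for i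
  proof (rule AE_I')
    define Z where "Z = PiE {..<k} (\<lambda>j. if j = i then N else D)"
    have Zs: "\<And>j. j \<in> {..<k} \<Longrightarrow> (if j = i then N else D) \<in> sets (lebesgue_on D)"
      using NS D by (auto simp: sets_restrict_space_iff)
    have "emeasure (PP D k) Z = (\<Prod>j\<in>{..<k}. emeasure (lebesgue_on D) (if j = i then N else D))"
      unfolding Z_def by (rule emeasure_PiM) (use Zs in auto)
    also have "\<dots> = 0" using N(1) i by (auto intro!: prod_zero)
    finally show "Z \<in> null_sets (PP D k)"
      unfolding Z_def using Zs by (auto intro!: sets_PiM_I_finite)
    show "{x \<in> space (PP D k). \<not> u (x i) = v (x i)} \<subseteq> Z"
      using N(2) D i by (auto simp: Z_def space_PiM PiE_iff extensional_def)
  qed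
  then have "AE x in PP D k. \<forall>i\<in>{..<k}. u (x i) = v (x i)"
    by (subst AE_finite_all) auto
  then have "AE x in PP D k. (\<lambda>i\<in>{..<k}. u (x i)) = (\<lambda>i\<in>{..<k}. v (x i))"
    by eventually_elim (auto simp: restrict_def fun_eq_iff)
  then show ?thesis unfolding DK_def by (rule AE_completion)
qed

lemma young_p:
  fixes a b X Y p :: real
  assumes p: "1 < p" and a: "0 \<le> a" and b: "0 \<le> b" and X: "0 < X" and Y: "0 < Y"
  shows "a * b powr (p-1) \<le> X powr (1/p) * Y powr ((p-1)/p) * (a powr p / (p*X) + b powr p * (p-1) / (p*Y))"
proof -
  define q where "q = p / (p-1)"
  have q: "1 < q" using p by (simp add: q_def)
  have pq: "1/p + 1/q = 1" using p by (simp add: q_def field_simps)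
  define a' where "a' = a / X powr (1/p)"
  define b' where "b' = b powr (p-1) / Y powr ((p-1)/p)"
  have a'0: "0 \<le> a'" using a X by (simp add: a'_def)
  have b'0: "0 \<le> b'" using b Y by (simp add: b'_def)
  have Y1: "Y powr ((p-1)/p) > 0" "X powr (1/p) > 0" using X Y by auto
  have "a' * b' \<le> a' powr p / p + b' powr q / q" by (rule Youngs_inequality[OF p q pq a'0 b'0])
  moreover have "a' powr p = a powr p / X"
    using a X p by (simp add: a'_def powr_divide powr_powr)
  moreover have "b' powr q = b powr p / Y"
    using b Y p by (simp add: b'_def q_def powr_divide powr_powr)
  moreover have "a' * b' = a * b powr (p-1) / (X powr (1/p) * Y powr ((p-1)/p))"
    by (simp add: a'_def b'_def)
  ultimately have "a * b powr (p-1) / (X powr (1/p) * Y powr ((p-1)/p)) \<le> a powr p / X / p + b powr p / Y / q"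
    by simp
  then have "a * b powr (p-1) \<le> (X powr (1/p) * Y powr ((p-1)/p)) * (a powr p / X / p + b powr p / Y / q)"
    using Y1 by (simp add: divide_le_eq mult.commute)
  also have "a powr p / X / p + b powr p / Y / q = a powr p / (p*X) + b powr p * (p-1) / (p*Y)"
    using p by (simp add: q_def field_simps)
  finally show ?thesis .
qed
lemma holder:
  fixes f g :: "'x \<Rightarrow> real"
  assumes p: "1 \<le> p" and fm[measurable]: "f \<in> borel_measurable M" and gm[measurable]: "g \<in> borel_measurable M"
    and f0: "\<And>x. 0 \<le> f x" and g0: "\<And>x. 0 \<le> g x"
    and fi: "integrable M (\<lambda>x. f x powr p)" and gi: "integrable M (\<lambda>x. g x powr p)"
  shows "(\<integral>\<^sup>+x. ennreal (f x * g x powr (p-1)) \<partial>M)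
     \<le> ennreal ((\<integral>x. f x powr p \<partial>M) powr (1/p) * (\<integral>x. g x powr p \<partial>M) powr ((p-1)/p))"
proof -
  define X where "X = (\<integral>x. f x powr p \<partial>M)"
  define Y where "Y = (\<integral>x. g x powr p \<partial>M)"
  have X0: "0 \<le> X" unfolding X_def by (rule integral_nonneg_AE) auto
  have Y0: "0 \<le> Y" unfolding Y_def by (rule integral_nonneg_AE) auto
  show ?thesis
  proof (cases "X = 0 \<or> Y = 0")
    case True
    have "AE x in M. f x * g x powr (p-1) = 0"
    proof (cases "X = 0")
      case True
      then have "AE x in M. f x powr p = 0"
        using integral_nonneg_eq_0_iff_AE[OF fi] unfolding X_def by auto
      then show ?thesis by eventually_elim simp
    next
      case False
      then have "Y = 0" using \<open>X = 0 \<or> Y = 0\<close> by simp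
      then have "AE x in M. g x powr p = 0"
        using integral_nonneg_eq_0_iff_AE[OF gi] unfolding Y_def by auto
      then show ?thesis by eventually_elim simp
    qed
    then have "(\<integral>\<^sup>+x. ennreal (f x * g x powr (p-1)) \<partial>M) = (\<integral>\<^sup>+x. 0 \<partial>M)"
      by (intro nn_integral_cong_AE) auto
    then show ?thesis by simp
  next
    case False
    then have X1: "0 < X" and Y1: "0 < Y" using X0 Y0 by auto
    show ?thesis
    proof (cases "p = 1")
      case True
      have "(\<integral>\<^sup>+x. ennreal (f x * g x powr (p-1)) \<partial>M) \<le> (\<integral>\<^sup>+x. ennreal (f x powr p) \<partial>M)"
      proof (rule nn_integral_mono, rule ennreal_leI)
        fix x
        have "g x powr (p-1) \<le> 1" using True g0[of x] by (simp add: powr_def)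
        then have "f x * g x powr (p-1) \<le> f x" using f0[of x] by (simp add: mult_left_le)
        also have "\<dots> = f x powr p" using True f0[of x] by simp
        finally show "f x * g x powr (p-1) \<le> f x powr p" .
      qed
      also have "\<dots> = ennreal X" unfolding X_def
        by (rule nn_integral_eq_integral) (use fi in auto)
      finally have L: "(\<integral>\<^sup>+x. ennreal (f x * g x powr (p-1)) \<partial>M) \<le> ennreal X" .
      have e: "X powr (1/p) * Y powr ((p-1)/p) = X" using True X1 Y1 by simp
      show ?thesis unfolding X_def[symmetric] Y_def[symmetric] e using L .
    next
      case False
      then have p1: "1 < p" using p by simp
      define K where "K = X powr (1/p) * Y powr ((p-1)/p)"
      have K0: "0 \<le> K" by (simp add: K_def)
      have "(\<integral>\<^sup>+x. ennreal (f x * g x powr (p-1)) \<partial>M)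
          \<le> (\<integral>\<^sup>+x. ennreal (K * (f x powr p / (p*X) + g x powr p * (p-1) / (p*Y))) \<partial>M)"
        by (rule nn_integral_mono, rule ennreal_leI) (unfold K_def, rule young_p[OF p1 f0 g0 X1 Y1])
      also have "\<dots> = ennreal (\<integral>x. K * (f x powr p / (p*X) + g x powr p * (p-1) / (p*Y)) \<partial>M)"
        by (rule nn_integral_eq_integral) (use fi gi p1 K0 X1 Y1 in auto)
      also have "(\<integral>x. K * (f x powr p / (p*X) + g x powr p * (p-1) / (p*Y)) \<partial>M)
          = K * ((\<integral>x. f x powr p \<partial>M) / (p*X) + (\<integral>x. g x powr p \<partial>M) * (p-1) / (p*Y))"
        using fi gi by simp
      also have "\<dots> = K" using X1 Y1 p1 unfolding X_def[symmetric] Y_def[symmetric]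
        by (simp add: field_simps)
      finally show ?thesis unfolding X_def[symmetric] Y_def[symmetric] K_def .
    qed
  qed
qed

lemma max_powr_le:
  fixes a b p :: real
  assumes "0 \<le> a" "0 \<le> b" "0 \<le> p"
  shows "max a b powr p \<le> a powr p + b powr p"
  using assms by (cases "a \<le> b") (auto simp: max_def)

lemma diff_powr_le:
  fixes x y :: "'b::real_normed_vector" and p :: real
  assumes "0 \<le> p"
  shows "norm (x - y) powr p \<le> 2 powr p * (norm x powr p + norm y powr p)"
proof -
  have "norm (x - y) \<le> 2 * max (norm x) (norm y)"
    using norm_triangle_ineq4[of x y] by linarith
  then have "norm (x - y) powr p \<le> (2 * max (norm x) (norm y)) powr p"
    using powr_mono2[OF assms norm_ge_zero] by blast
  also have "\<dots> = 2 powr p * max (norm x) (norm y) powr p" by (simp add: powr_mult)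
  also have "\<dots> \<le> 2 powr p * (norm x powr p + norm y powr p)"
    by (rule mult_left_mono[OF max_powr_le]) (use assms in auto)
  finally show ?thesis .
qed

lemma Lp_facts:
  fixes u v :: "'a::euclidean_space \<Rightarrow> 'b::euclidean_space"
  assumes p: "1 \<le> p" and u: "in_Lp D p u" and v: "in_Lp D p v"
  shows "in_Lp D p (\<lambda>x. u x - v x)"
    and "(\<integral>x. norm (u x - v x) powr p \<partial>lebesgue_on D) \<le> 2 powr p * ((\<integral>x. norm (u x) powr p \<partial>lebesgue_on D) + (\<integral>x. norm (v x) powr p \<partial>lebesgue_on D))"
    and "integrable (lebesgue_on D) (\<lambda>x. max (norm (v x)) (norm (u x)) powr p)"
    and "(\<integral>x. max (norm (v x)) (norm (u x)) powr p \<partial>lebesgue_on D) \<le> (\<integral>x. norm (u x) powr p \<partial>lebesgue_on D) + (\<integral>x. norm (v x) powr p \<partial>lebesgue_on D)"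
proof -
  have um[measurable]: "u \<in> borel_measurable (lebesgue_on D)" and ui: "integrable (lebesgue_on D) (\<lambda>x. norm (u x) powr p)"
    using u by (auto simp: in_Lp_def)
  have vm[measurable]: "v \<in> borel_measurable (lebesgue_on D)" and vi: "integrable (lebesgue_on D) (\<lambda>x. norm (v x) powr p)"
    using v by (auto simp: in_Lp_def)
  have si: "integrable (lebesgue_on D) (\<lambda>x. 2 powr p * (norm (u x) powr p + norm (v x) powr p))"
    using ui vi by auto
  have di: "integrable (lebesgue_on D) (\<lambda>x. norm (u x - v x) powr p)"
  proof (rule Bochner_Integration.integrable_bound[OF si])
    show "(\<lambda>x. norm (u x - v x) powr p) \<in> borel_measurable (lebesgue_on D)" by measurable
    show "AE x in lebesgue_on D. norm (norm (u x - v x) powr p) \<le> norm (2 powr p * (norm (u x) powr p + norm (v x) powr p))"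
      using diff_powr_le[of p] p by (intro AE_I2) auto
  qed
  then show "in_Lp D p (\<lambda>x. u x - v x)" by (simp add: in_Lp_def)
  show "(\<integral>x. norm (u x - v x) powr p \<partial>lebesgue_on D) \<le> 2 powr p * ((\<integral>x. norm (u x) powr p \<partial>lebesgue_on D) + (\<integral>x. norm (v x) powr p \<partial>lebesgue_on D))"
  proof -
    have "(\<integral>x. norm (u x - v x) powr p \<partial>lebesgue_on D) \<le> (\<integral>x. 2 powr p * (norm (u x) powr p + norm (v x) powr p) \<partial>lebesgue_on D)"
      by (rule integral_mono[OF di si]) (use diff_powr_le[of p] p in auto)
    also have "\<dots> = 2 powr p * ((\<integral>x. norm (u x) powr p \<partial>lebesgue_on D) + (\<integral>x. norm (v x) powr p \<partial>lebesgue_on D))"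
      using ui vi by simp
    finally show ?thesis .
  qed
  have si2: "integrable (lebesgue_on D) (\<lambda>x. norm (u x) powr p + norm (v x) powr p)"
    using ui vi by auto
  have mi: "integrable (lebesgue_on D) (\<lambda>x. max (norm (v x)) (norm (u x)) powr p)"
  proof (rule Bochner_Integration.integrable_bound[OF si2])
    show "(\<lambda>x. max (norm (v x)) (norm (u x)) powr p) \<in> borel_measurable (lebesgue_on D)" by measurable
    show "AE x in lebesgue_on D. norm (max (norm (v x)) (norm (u x)) powr p) \<le> norm (norm (u x) powr p + norm (v x) powr p)"
    proof (intro AE_I2)
      fix x
      have "max (norm (v x)) (norm (u x)) powr p \<le> norm (u x) powr p + norm (v x) powr p"
        using max_powr_le[of "norm (v x)" "norm (u x)" p] p by (simp add: add.commute)
      then show "norm (max (norm (v x)) (norm (u x)) powr p) \<le> norm (norm (u x) powr p + norm (v x) powr p)"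
        by simp
    qed
  qed
  then show "integrable (lebesgue_on D) (\<lambda>x. max (norm (v x)) (norm (u x)) powr p)" .
  have "(\<integral>x. max (norm (v x)) (norm (u x)) powr p \<partial>lebesgue_on D) \<le> (\<integral>x. norm (u x) powr p + norm (v x) powr p \<partial>lebesgue_on D)"
  proof (rule integral_mono[OF mi si2])
    fix x show "max (norm (v x)) (norm (u x)) powr p \<le> norm (u x) powr p + norm (v x) powr p"
      using max_powr_le[of "norm (v x)" "norm (u x)" p] p by (simp add: add.commute)
  qed
  also have "\<dots> = (\<integral>x. norm (u x) powr p \<partial>lebesgue_on D) + (\<integral>x. norm (v x) powr p \<partial>lebesgue_on D)"
    using ui vi by simp
  finally show "(\<integral>x. max (norm (v x)) (norm (u x)) powr p \<partial>lebesgue_on D) \<le> (\<integral>x. norm (u x) powr p \<partial>lebesgue_on D) + (\<integral>x. norm (v x) powr p \<partial>lebesgue_on D)" .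
qed
lemma lipschitz_core:
  fixes g :: "(nat \<Rightarrow> 'a::euclidean_space) \<Rightarrow> (nat \<Rightarrow> 'b::euclidean_space) \<Rightarrow> real"
  assumes D: "D \<in> sets lebesgue" and p: "1 \<le> p" and H1: "Hkp1 D k p g"
  shows "\<exists>K::real \<Rightarrow> real. \<forall>R u v. in_Lp D p u \<longrightarrow> in_Lp D p v \<longrightarrow>
     (\<integral>t. norm (u t) powr p \<partial>lebesgue_on D) \<le> R \<longrightarrow> (\<integral>t. norm (v t) powr p \<partial>lebesgue_on D) \<le> R \<longrightarrow>
     \<bar>Lg D k g u - Lg D k g v\<bar> \<le> K R * Lp_norm D p (\<lambda>x. u x - v x)"
proof -
  have sf: "sigma_finite_measure (lebesgue_on D)" by (rule sf_leb[OF D])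
  from H1 obtain r h where Hg: "Hkp D k p g" and r: "r > 0" and Hh: "Hkp D (k - 1) p h"
    and h0: "\<forall>x \<xi>. 0 \<le> h x \<xi>" and lip: "\<forall>x \<in> PiE {..<k} (\<lambda>_. D). \<forall>y \<in> PiE {..<k} (\<lambda>_. D).
           (\<Sum>i<k. (norm (x i - y i))\<^sup>2) < r\<^sup>2 \<longrightarrow>
           (\<forall>\<xi> \<in> PiE {..<k} (\<lambda>_. UNIV). \<forall>\<zeta> \<in> PiE {..<k} (\<lambda>_. UNIV).
              \<bar>g x \<zeta> - g y \<xi>\<bar> \<le> (\<Sum>i<k. norm (\<zeta> i - \<xi> i) * (max (norm (\<xi> i)) (norm (\<zeta> i))) powr (p - 1)
                    * h (subvec x ({..<k} - {i})) (subvec \<xi> ({..<k} - {i}))))"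
    unfolding Hkp1_def by blast
  obtain ch where ch0: "\<forall>j. 0 \<le> ch j" and chB: "\<forall>u. in_Lp D p u \<longrightarrow>
     (\<exists>G \<in> borel_measurable (PP D (k - 1)).
       (\<forall>x \<in> space (PP D (k - 1)). ennreal \<bar>h x (\<lambda>i\<in>{..<k - 1}. u (x i))\<bar> \<le> G x) \<and>
       (\<integral>\<^sup>+x. G x \<partial>PP D (k - 1)) = ennreal (\<Sum>A\<in>Pow {..<k - 1}. ch (card ({..<k - 1} - A)) *
            (\<integral>t. norm (u t) powr p \<partial>lebesgue_on D) ^ card A))"
    using Hkp_bound[OF D Hh] by blast
  define Kh where "Kh R = (\<Sum>B\<in>Pow {..<k - 1}. ch (card ({..<k - 1} - B)) * (max R 0) ^ card B)" for R
  define K where "K R = real k * ((2 * max R 0) powr ((p-1)/p) * Kh R)" for R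
  show ?thesis
  proof (intro exI[of _ K] allI impI)
    fix R and u v :: "'a \<Rightarrow> 'b"
    assume u: "in_Lp D p u" and v: "in_Lp D p v"
      and Ju: "(\<integral>t. norm (u t) powr p \<partial>lebesgue_on D) \<le> R" and Jv: "(\<integral>t. norm (v t) powr p \<partial>lebesgue_on D) \<le> R"
    have um[measurable]: "u \<in> borel_measurable (lebesgue_on D)" using u by (simp add: in_Lp_def)
    have vm[measurable]: "v \<in> borel_measurable (lebesgue_on D)" using v by (simp add: in_Lp_def)
    define Jv' where "Jv' = (\<integral>t. norm (v t) powr p \<partial>lebesgue_on D)"
    have Jv0: "0 \<le> Jv'" unfolding Jv'_def by (rule integral_nonneg_AE) auto
    have Ju0: "0 \<le> (\<integral>t. norm (u t) powr p \<partial>lebesgue_on D)" by (rule integral_nonneg_AE) auto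
    define L where "L = Lp_norm D p (\<lambda>x. u x - v x)"
    have L0: "0 \<le> L" by (simp add: L_def Lp_norm_def)
    define M2 where "M2 = (2 * max R 0) powr ((p-1)/p)"
    have M20: "0 \<le> M2" by (simp add: M2_def)
    have Kh0: "0 \<le> Kh R" unfolding Kh_def using ch0 by (auto intro!: sum_nonneg)
    obtain Gh where Ghm: "Gh \<in> borel_measurable (PP D (k - 1))"
      and Ghle: "\<forall>x \<in> space (PP D (k - 1)). ennreal \<bar>h x (\<lambda>i\<in>{..<k - 1}. v (x i))\<bar> \<le> Gh x"
      and GhI: "(\<integral>\<^sup>+x. Gh x \<partial>PP D (k - 1)) = ennreal (\<Sum>A\<in>Pow {..<k - 1}. ch (card ({..<k - 1} - A)) * Jv' ^ card A)"
      using chB v unfolding Jv'_def by blast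
    define a where "a t = ennreal (norm (u t - v t) * max (norm (v t)) (norm (u t)) powr (p-1))" for t
    have am[measurable]: "a \<in> borel_measurable (lebesgue_on D)" unfolding a_def by measurable
    define Fu where "Fu x = g x (\<lambda>i\<in>{..<k}. u (x i))" for x
    define Fv where "Fv x = g x (\<lambda>i\<in>{..<k}. v (x i))" for x
    have iu: "integrable (DK D k) Fu" unfolding Fu_def by (rule integrable_F[OF D Hg u])
    have iv: "integrable (DK D k) Fv" unfolding Fv_def by (rule integrable_F[OF D Hg v])
    have pw: "ennreal (norm (Fu x - Fv x)) \<le> (\<Sum>i<k. a (x i) * Gh (subvec x ({..<k} - {i})))"
      if x: "x \<in> space (PP D k)" for x
    proof -
      have x': "x \<in> PiE {..<k} (\<lambda>_. D)" using x D by (simp add: space_PiM)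
      define \<zeta> where "\<zeta> = (\<lambda>i\<in>{..<k}. u (x i))"
      define \<xi> where "\<xi> = (\<lambda>i\<in>{..<k}. v (x i))"
      have Z: "\<zeta> \<in> PiE {..<k} (\<lambda>_. UNIV)" "\<xi> \<in> PiE {..<k} (\<lambda>_. UNIV)" by (simp_all add: \<zeta>_def \<xi>_def)
      have cond: "(\<Sum>i<k. (norm (x i - x i))\<^sup>2) < r\<^sup>2" using r by simp
      have L: "\<bar>g x \<zeta> - g x \<xi>\<bar> \<le> (\<Sum>i<k. norm (\<zeta> i - \<xi> i) * (max (norm (\<xi> i)) (norm (\<zeta> i))) powr (p - 1)
                    * h (subvec x ({..<k} - {i})) (subvec \<xi> ({..<k} - {i})))"
        using lip x' cond Z by blast
      have tnn: "0 \<le> norm (\<zeta> i - \<xi> i) * (max (norm (\<xi> i)) (norm (\<zeta> i))) powr (p - 1)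
                    * h (subvec x ({..<k} - {i})) (subvec \<xi> ({..<k} - {i}))" for i
        using h0 by simp
      have tle: "ennreal (norm (\<zeta> i - \<xi> i) * (max (norm (\<xi> i)) (norm (\<zeta> i))) powr (p - 1)
                    * h (subvec x ({..<k} - {i})) (subvec \<xi> ({..<k} - {i})))
                \<le> a (x i) * Gh (subvec x ({..<k} - {i}))" if i: "i \<in> {..<k}" for i
      proof -
        have ck: "card ({..<k} - {i}) = k - 1" using i by simp
        have sv: "subvec \<xi> ({..<k} - {i}) = (\<lambda>j\<in>{..<k - 1}. v (subvec x ({..<k} - {i}) j))"
        proof (rule ext)
          fix j show "subvec \<xi> ({..<k} - {i}) j = (\<lambda>j\<in>{..<k - 1}. v (subvec x ({..<k} - {i}) j)) j"
          proof (cases "j < k - 1")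
            case True
            then have "sorted_list_of_set ({..<k} - {i}) ! j \<in> {..<k} - {i}"
              using sorted_in[of "{..<k} - {i}" j] ck by simp
            then show ?thesis using True ck by (simp add: subvec_def \<xi>_def)
          qed (use ck in \<open>simp add: subvec_def\<close>)
        qed
        have sx: "subvec x ({..<k} - {i}) \<in> space (PP D (k - 1))"
          using subvec_space[of "{..<k} - {i}" x "{..<k}" D] x' ck by (simp add: space_PP)
        have "ennreal \<bar>h (subvec x ({..<k} - {i})) (\<lambda>j\<in>{..<k - 1}. v (subvec x ({..<k} - {i}) j))\<bar>
            \<le> Gh (subvec x ({..<k} - {i}))" using Ghle sx by blast
        then have hle: "ennreal (h (subvec x ({..<k} - {i})) (subvec \<xi> ({..<k} - {i}))) \<le> Gh (subvec x ({..<k} - {i}))"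
          using h0 by (simp add: sv)
        have eq: "norm (\<zeta> i - \<xi> i) * (max (norm (\<xi> i)) (norm (\<zeta> i))) powr (p - 1)
            = norm (u (x i) - v (x i)) * max (norm (v (x i))) (norm (u (x i))) powr (p-1)"
          using i by (simp add: \<zeta>_def \<xi>_def)
        have "ennreal (norm (\<zeta> i - \<xi> i) * (max (norm (\<xi> i)) (norm (\<zeta> i))) powr (p - 1)
                    * h (subvec x ({..<k} - {i})) (subvec \<xi> ({..<k} - {i})))
            = a (x i) * ennreal (h (subvec x ({..<k} - {i})) (subvec \<xi> ({..<k} - {i})))"
          unfolding eq a_def using h0 by (simp add: ennreal_mult)
        also have "\<dots> \<le> a (x i) * Gh (subvec x ({..<k} - {i}))"
          by (rule mult_left_mono[OF hle]) simp
        finally show ?thesis .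
      qed
      have "ennreal (norm (Fu x - Fv x)) = ennreal \<bar>g x \<zeta> - g x \<xi>\<bar>"
        by (simp add: Fu_def Fv_def \<zeta>_def \<xi>_def)
      also have "\<dots> \<le> ennreal (\<Sum>i<k. norm (\<zeta> i - \<xi> i) * (max (norm (\<xi> i)) (norm (\<zeta> i))) powr (p - 1)
                    * h (subvec x ({..<k} - {i})) (subvec \<xi> ({..<k} - {i})))"
        by (rule ennreal_leI[OF L])
      also have "\<dots> = (\<Sum>i<k. ennreal (norm (\<zeta> i - \<xi> i) * (max (norm (\<xi> i)) (norm (\<zeta> i))) powr (p - 1)
                    * h (subvec x ({..<k} - {i})) (subvec \<xi> ({..<k} - {i}))))"
        by (rule sum_ennreal[symmetric]) (rule tnn)
      also have "\<dots> \<le> (\<Sum>i<k. a (x i) * Gh (subvec x ({..<k} - {i})))"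
        by (rule sum_mono) (rule tle)
      finally show ?thesis .
    qed
    have int_eq: "(\<integral>\<^sup>+x. (\<Sum>i<k. a (x i) * Gh (subvec x ({..<k} - {i}))) \<partial>PP D k)
        = real k * ((\<integral>\<^sup>+t. a t \<partial>lebesgue_on D) * (\<integral>\<^sup>+y. Gh y \<partial>PP D (k - 1)))"
    proof -
      have cki: "card ({..<k} - {i}) = k - 1" if "i < k" for i using that by simp
      have mt: "(\<lambda>x. a (x i) * Gh (subvec x ({..<k} - {i}))) \<in> borel_measurable (PP D k)" if i: "i \<in> {..<k}" for i
      proof -
        have [measurable]: "(\<lambda>x. a (x i)) \<in> borel_measurable (PP D k)"
          by (intro measurable_compose[OF measurable_component_singleton[of i "{..<k}" "\<lambda>_. lebesgue_on D"] am] i)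
        have ck: "card ({..<k} - {i}) = k - 1" using cki i by simp
        have "(\<lambda>x. subvec x ({..<k} - {i})) \<in> PP D k \<rightarrow>\<^sub>M PP D (card ({..<k} - {i}))"
          by (rule measurable_subvec) auto
        then have [measurable]: "(\<lambda>x. subvec x ({..<k} - {i})) \<in> PP D k \<rightarrow>\<^sub>M PP D (k - 1)"
          unfolding ck .
        note Ghm[measurable]
        show ?thesis by measurable
      qed
      have each: "(\<integral>\<^sup>+x. a (x i) * Gh (subvec x ({..<k} - {i})) \<partial>PP D k)
          = (\<integral>\<^sup>+t. a t \<partial>lebesgue_on D) * (\<integral>\<^sup>+y. Gh y \<partial>PP D (k - 1))" if i: "i \<in> {..<k}" for i
      proof -
        have sx: "subvec x {i} 0 = x i" for x by (simp add: subvec_def)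
        have fm0: "(\<lambda>y. a (y 0)) \<in> borel_measurable (PP D 1)"
          by (intro measurable_compose[OF measurable_component_singleton[of 0 "{..<1}" "\<lambda>_. lebesgue_on D"] am]) simp
        have c1: "card {i} = 1" by simp
        have fm: "(\<lambda>y. a (y 0)) \<in> borel_measurable (PP D (card {i}))" unfolding c1 by (rule fm0)
        have ck: "card ({..<k} - {i}) = k - 1" using cki i by simp
        have hm: "Gh \<in> borel_measurable (PP D (card ({..<k} - {i})))" unfolding ck by (rule Ghm)
        have "(\<integral>\<^sup>+x. a (x i) * Gh (subvec x ({..<k} - {i})) \<partial>PP D k)
            = (\<integral>\<^sup>+x. a (subvec x {i} 0) * Gh (subvec x ({..<k} - {i})) \<partial>PP D k)" by (simp only: sx)
        also have "\<dots> = (\<integral>\<^sup>+y. a (y 0) \<partial>PP D (card {i})) * (\<integral>\<^sup>+y. Gh y \<partial>PP D (card ({..<k} - {i})))"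
          by (rule split_integral[OF sf _ fm hm]) (use i in auto)
        also have "(\<integral>\<^sup>+y. a (y 0) \<partial>PP D (card {i})) = (\<integral>\<^sup>+t. a t \<partial>lebesgue_on D)"
          using prod_integral[OF sf am, of 1] by simp
        finally show ?thesis unfolding ck .
      qed
      have "(\<integral>\<^sup>+x. (\<Sum>i<k. a (x i) * Gh (subvec x ({..<k} - {i}))) \<partial>PP D k)
          = (\<Sum>i<k. (\<integral>\<^sup>+x. a (x i) * Gh (subvec x ({..<k} - {i})) \<partial>PP D k))"
        by (rule nn_integral_sum) (rule mt)
      also have "\<dots> = (\<Sum>i<k. (\<integral>\<^sup>+t. a t \<partial>lebesgue_on D) * (\<integral>\<^sup>+y. Gh y \<partial>PP D (k - 1)))"
        by (rule sum.cong) (use each in auto)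
      also have "\<dots> = real k * ((\<integral>\<^sup>+t. a t \<partial>lebesgue_on D) * (\<integral>\<^sup>+y. Gh y \<partial>PP D (k - 1)))"
        by (simp add: ennreal_of_nat_eq_real_of_nat)
      finally show ?thesis .
    qed
    have hol: "(\<integral>\<^sup>+t. a t \<partial>lebesgue_on D) \<le> ennreal (L * M2)"
    proof -
      have i1: "integrable (lebesgue_on D) (\<lambda>t. norm (u t - v t) powr p)"
        using Lp_facts(1)[OF p u v] by (simp add: in_Lp_def)
      have i2: "integrable (lebesgue_on D) (\<lambda>t. max (norm (v t)) (norm (u t)) powr p)"
        by (rule Lp_facts(3)[OF p u v])
      have "(\<integral>\<^sup>+t. a t \<partial>lebesgue_on D) \<le> ennreal ((\<integral>t. norm (u t - v t) powr p \<partial>lebesgue_on D) powr (1/p) *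
          (\<integral>t. max (norm (v t)) (norm (u t)) powr p \<partial>lebesgue_on D) powr ((p-1)/p))"
        unfolding a_def by (rule holder[OF p _ _ _ _ i1 i2]) (auto simp: le_max_iff_disj)
      also have "\<dots> \<le> ennreal (L * M2)"
      proof (rule ennreal_leI, unfold L_def Lp_norm_def, rule mult_left_mono)
        have "(\<integral>t. max (norm (v t)) (norm (u t)) powr p \<partial>lebesgue_on D) \<le> 2 * max R 0"
          using Lp_facts(4)[OF p u v] Ju Jv by linarith
        moreover have "0 \<le> (\<integral>t. max (norm (v t)) (norm (u t)) powr p \<partial>lebesgue_on D)"
          by (rule integral_nonneg_AE) auto
        ultimately show "(\<integral>t. max (norm (v t)) (norm (u t)) powr p \<partial>lebesgue_on D) powr ((p-1)/p) \<le> M2"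
          unfolding M2_def using p by (intro powr_mono2) auto
      qed simp
      finally show ?thesis .
    qed
    have ghb: "(\<integral>\<^sup>+y. Gh y \<partial>PP D (k - 1)) \<le> ennreal (Kh R)"
      unfolding GhI Kh_def
    proof (rule ennreal_leI, rule sum_mono)
      fix B :: "nat set"
      have "Jv' ^ card B \<le> max R 0 ^ card B"
        by (rule power_mono) (use Jv Jv0 in \<open>auto simp: Jv'_def\<close>)
      then show "ch (card ({..<k - 1} - B)) * Jv' ^ card B \<le> ch (card ({..<k - 1} - B)) * max R 0 ^ card B"
        by (rule mult_left_mono) (use ch0 in auto)
    qed
    have e1: "integral\<^sup>L (DK D k) (\<lambda>x. Fu x - Fv x) = integral\<^sup>L (DK D k) Fu - integral\<^sup>L (DK D k) Fv"
      by (rule Bochner_Integration.integral_diff[OF iu iv])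
    have e2: "Lg D k g u = integral\<^sup>L (DK D k) Fu" unfolding Lg_def Fu_def ..
    have e3: "Lg D k g v = integral\<^sup>L (DK D k) Fv" unfolding Lg_def Fv_def ..
    have "ennreal (norm (Lg D k g u - Lg D k g v)) = ennreal (norm (integral\<^sup>L (DK D k) (\<lambda>x. Fu x - Fv x)))"
      unfolding e1 e2 e3 ..
    also have "\<dots> \<le> (\<integral>\<^sup>+x. norm (Fu x - Fv x) \<partial>DK D k)"
      by (rule integral_norm_bound_ennreal) (use iu iv in auto)
    also have "\<dots> = (\<integral>\<^sup>+x. norm (Fu x - Fv x) \<partial>PP D k)"
      by (simp add: DK_def nn_integral_completion)
    also have "\<dots> \<le> (\<integral>\<^sup>+x. (\<Sum>i<k. a (x i) * Gh (subvec x ({..<k} - {i}))) \<partial>PP D k)"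
      by (rule nn_integral_mono) (rule pw)
    also have "\<dots> \<le> real k * (ennreal (L * M2) * ennreal (Kh R))"
      unfolding int_eq by (rule mult_left_mono[OF mult_mono[OF hol ghb]]) simp_all
    also have "\<dots> = ennreal (K R * L)"
    proof -
      have e: "K R * L = real k * ((L * M2) * Kh R)" by (simp add: K_def M2_def algebra_simps)
      have "ennreal (real k * ((L * M2) * Kh R)) = ennreal (real k) * (ennreal (L * M2) * ennreal (Kh R))"
        using L0 M20 Kh0 by (simp add: ennreal_mult del: ennreal_of_nat_eq_real_of_nat)
      then have "ennreal (K R * L) = ennreal (real k) * (ennreal (L * M2) * ennreal (Kh R))"
        unfolding e .
      then show ?thesis by simp
    qed
    finally have "ennreal (norm (Lg D k g u - Lg D k g v)) \<le> ennreal (K R * L)" .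
    moreover have "0 \<le> K R * L" using L0 M20 Kh0 by (simp add: K_def M2_def)
    ultimately have "norm (Lg D k g u - Lg D k g v) \<le> K R * L"
      by (simp add: ennreal_le_iff)
    then show "\<bar>Lg D k g u - Lg D k g v\<bar> \<le> K R * Lp_norm D p (\<lambda>x. u x - v x)"
      by (simp add: L_def)
  qed
qed


lemma J_Lp: assumes "1 \<le> p" shows "Lp_norm D p u powr p = (\<integral>t. norm (u t) powr p \<partial>lebesgue_on D)"
proof -
  have "0 \<le> (\<integral>t. norm (u t) powr p \<partial>lebesgue_on D)" by (rule integral_nonneg_AE) auto
  then show ?thesis using assms by (simp add: Lp_norm_def powr_powr)
qed

theorem lemma2p4:
  fixes D :: "'a::euclidean_space set" and p :: real
  assumes "open D" and "connected D" and "1 \<le> p"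
  shows
    "(\<forall>k (g :: (nat \<Rightarrow> 'a) \<Rightarrow> (nat \<Rightarrow> 'b::euclidean_space) \<Rightarrow> real). Hkp D k p g \<longrightarrow>
        (\<forall>u. in_Lp D p u \<longrightarrow> integrable (DK D k) (\<lambda>x. g x (\<lambda>i\<in>{..<k}. u (x i)))) \<and>
        (\<forall>u v. in_Lp D p u \<longrightarrow> in_Lp D p v \<longrightarrow> (AE x in lebesgue_on D. u x = v x) \<longrightarrow>
               Lg D k g u = Lg D k g v))
   \<and> (\<forall>k (g :: (nat \<Rightarrow> 'a) \<Rightarrow> (nat \<Rightarrow> 'b) \<Rightarrow> real). Hkp1 D k p g \<longrightarrow>
        (\<forall>u. in_Lp D p u \<longrightarrow> (\<forall>e>0. \<exists>\<delta>>0. \<forall>v. in_Lp D p v \<longrightarrow>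
               Lp_norm D p (\<lambda>x. u x - v x) < \<delta> \<longrightarrow> \<bar>Lg D k g u - Lg D k g v\<bar> < e)) \<and>
        (\<forall>R. \<exists>C. \<forall>u v. in_Lp D p u \<longrightarrow> in_Lp D p v \<longrightarrow> Lp_norm D p u \<le> R \<longrightarrow> Lp_norm D p v \<le> R \<longrightarrow>
               \<bar>Lg D k g u - Lg D k g v\<bar> \<le> C * Lp_norm D p (\<lambda>x. u x - v x)))"
proof -
  have D: "D \<in> sets lebesgue" using assms(1) by (simp add: borel_open)
  have p: "1 \<le> p" by (rule assms(3))
  define J where "J w = (\<integral>t. norm (w t) powr p \<partial>lebesgue_on D)" for w :: "'a \<Rightarrow> 'b"
  have J0: "0 \<le> J w" for w unfolding J_def by (rule integral_nonneg_AE) auto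
  have part1: "(\<forall>u. in_Lp D p u \<longrightarrow> integrable (DK D k) (\<lambda>x. g x (\<lambda>i\<in>{..<k}. u (x i)))) \<and>
        (\<forall>u v. in_Lp D p u \<longrightarrow> in_Lp D p v \<longrightarrow> (AE x in lebesgue_on D. u x = v x) \<longrightarrow>
               Lg D k g u = Lg D k g v)" if H: "Hkp D k p g" for k and g :: "(nat \<Rightarrow> 'a) \<Rightarrow> (nat \<Rightarrow> 'b) \<Rightarrow> real"
  proof (intro conjI allI impI)
    fix u :: "'a \<Rightarrow> 'b" assume "in_Lp D p u"
    then show "integrable (DK D k) (\<lambda>x. g x (\<lambda>i\<in>{..<k}. u (x i)))" by (rule integrable_F[OF D H])
  next
    fix u v :: "'a \<Rightarrow> 'b" assume u: "in_Lp D p u" and v: "in_Lp D p v" and ae: "AE x in lebesgue_on D. u x = v x"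
    have C: "caratheodory D k g" using H by (simp add: Hkp_def)
    show "Lg D k g u = Lg D k g v" unfolding Lg_def
    proof (rule integral_cong_AE)
      show "(\<lambda>x. g x (\<lambda>i\<in>{..<k}. u (x i))) \<in> borel_measurable (DK D k)"
        using u by (intro meas_F[OF C]) (simp add: in_Lp_def)
      show "(\<lambda>x. g x (\<lambda>i\<in>{..<k}. v (x i))) \<in> borel_measurable (DK D k)"
        using v by (intro meas_F[OF C]) (simp add: in_Lp_def)
      show "AE x in DK D k. g x (\<lambda>i\<in>{..<k}. u (x i)) = g x (\<lambda>i\<in>{..<k}. v (x i))"
        using AE_comp[OF D ae, of k] by eventually_elim simp
    qed
  qed
  have part2: "(\<forall>u. in_Lp D p u \<longrightarrow> (\<forall>e>0. \<exists>\<delta>>0. \<forall>v. in_Lp D p v \<longrightarrow>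
               Lp_norm D p (\<lambda>x. u x - v x) < \<delta> \<longrightarrow> \<bar>Lg D k g u - Lg D k g v\<bar> < e)) \<and>
        (\<forall>R. \<exists>C. \<forall>u v. in_Lp D p u \<longrightarrow> in_Lp D p v \<longrightarrow> Lp_norm D p u \<le> R \<longrightarrow> Lp_norm D p v \<le> R \<longrightarrow>
               \<bar>Lg D k g u - Lg D k g v\<bar> \<le> C * Lp_norm D p (\<lambda>x. u x - v x))"
    if H1: "Hkp1 D k p g" for k and g :: "(nat \<Rightarrow> 'a) \<Rightarrow> (nat \<Rightarrow> 'b) \<Rightarrow> real"
  proof -
    obtain K where K: "\<And>R u v. in_Lp D p u \<Longrightarrow> in_Lp D p v \<Longrightarrow> J u \<le> R \<Longrightarrow> J v \<le> R \<Longrightarrow>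
       \<bar>Lg D k g u - Lg D k g v\<bar> \<le> K R * Lp_norm D p (\<lambda>x. u x - v x)"
      using lipschitz_core[OF D p H1] unfolding J_def by blast
    have JL: "J w = Lp_norm D p w powr p" for w unfolding J_def using J_Lp[OF p, of D w] by simp
    have Ln0: "0 \<le> Lp_norm D p w" for w :: "'a \<Rightarrow> 'b" by (simp add: Lp_norm_def)
    show ?thesis
    proof (intro conjI allI impI)
      fix R
      show "\<exists>C. \<forall>u v. in_Lp D p u \<longrightarrow> in_Lp D p v \<longrightarrow> Lp_norm D p u \<le> R \<longrightarrow> Lp_norm D p v \<le> R \<longrightarrow>
               \<bar>Lg D k g u - Lg D k g v\<bar> \<le> C * Lp_norm D p (\<lambda>x. u x - v x)"
      proof (intro exI[of _ "K (max R 0 powr p)"] allI impI)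
        fix u v :: "'a \<Rightarrow> 'b" assume u: "in_Lp D p u" and v: "in_Lp D p v"
          and uR: "Lp_norm D p u \<le> R" and vR: "Lp_norm D p v \<le> R"
        have "J u \<le> max R 0 powr p" unfolding JL using uR p Ln0 by (intro powr_mono2) auto
        moreover have "J v \<le> max R 0 powr p" unfolding JL using vR p Ln0 by (intro powr_mono2) auto
        ultimately show "\<bar>Lg D k g u - Lg D k g v\<bar> \<le> K (max R 0 powr p) * Lp_norm D p (\<lambda>x. u x - v x)"
          using K u v by blast
      qed
    next
      fix u :: "'a \<Rightarrow> 'b" and e :: real assume u: "in_Lp D p u" and e: "e > 0"
      define R where "R = max (J u) (2 powr p * (J u + 1))"
      define C where "C = K R"
      define \<delta> where "\<delta> = min 1 (e / (\<bar>C\<bar> + 1))"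
      have \<delta>: "\<delta> > 0" using e by (simp add: \<delta>_def)
      show "\<exists>\<delta>>0. \<forall>v. in_Lp D p v \<longrightarrow> Lp_norm D p (\<lambda>x. u x - v x) < \<delta> \<longrightarrow> \<bar>Lg D k g u - Lg D k g v\<bar> < e"
      proof (intro exI[of _ \<delta>] conjI allI impI \<delta>)
        fix v :: "'a \<Rightarrow> 'b" assume v: "in_Lp D p v" and n: "Lp_norm D p (\<lambda>x. u x - v x) < \<delta>"
        define w where "w x = u x - v x" for x
        have w: "in_Lp D p w" unfolding w_def by (rule Lp_facts(1)[OF p u v])
        have wd: "w = (\<lambda>x. u x - v x)" by (rule ext) (simp add: w_def)
        have "Lp_norm D p w < 1" using n by (simp add: wd \<delta>_def)
        then have "Lp_norm D p w powr p \<le> 1 powr p"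
          by (intro powr_mono2) (use p Ln0 in auto)
        then have "J w \<le> 1" unfolding JL by simp
        have "J (\<lambda>x. u x - w x) \<le> 2 powr p * (J u + J w)"
          unfolding J_def by (rule Lp_facts(2)[OF p u w])
        moreover have "(\<lambda>x. u x - w x) = v" by (simp add: w_def)
        ultimately have "J v \<le> 2 powr p * (J u + J w)" by simp
        also have "\<dots> \<le> 2 powr p * (J u + 1)" using \<open>J w \<le> 1\<close> by simp
        finally have Jv: "J v \<le> R" by (simp add: R_def)
        have Ju: "J u \<le> R" by (simp add: R_def)
        have L: "\<bar>Lg D k g u - Lg D k g v\<bar> \<le> C * Lp_norm D p (\<lambda>x. u x - v x)"
          unfolding C_def by (rule K[OF u v Ju Jv])
        have "C * Lp_norm D p (\<lambda>x. u x - v x) \<le> \<bar>C\<bar> * Lp_norm D p (\<lambda>x. u x - v x)"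
          using Ln0 by (intro mult_right_mono) auto
        also have "\<dots> \<le> \<bar>C\<bar> * \<delta>" using n by (intro mult_left_mono) auto
        also have "\<dots> \<le> \<bar>C\<bar> * (e / (\<bar>C\<bar> + 1))" by (intro mult_left_mono) (auto simp: \<delta>_def)
        also have "\<dots> < e" using e by (simp add: field_simps)
        finally show "\<bar>Lg D k g u - Lg D k g v\<bar> < e" using L by linarith
      qed
    qed
  qed
  show ?thesis using part1 part2 by blast
qed
end
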